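(* Let $N\ge 2$ be even and consider the Clos network $C_{N,3}$. Let $X_1$ consist of $N/2$ flows from $I_1$ to $O_1$ and $N/2$ flows from $I_2$ to $O_2$; let $X_2$ consist of $N/2$ flows from $I_1$ to $O_2$; let $Y_2$ consist of $N/2$ flows from $I_3$ to $O_1$ and $N/2$ flows from $I_3$ to $O_2$; all flows have demand $1$, and distinct flows incident to a common input (resp. output) switch use distinct source (resp. destination) servers of that switch. Let $X=X_1\cup X_2$ and $Y=X_1\cup Y_2$, and let $\mathcal{M}=\{M_1,\dots,M_N\}$. Then: (P1) in every link-disjoint routing of $X$, the $N/2$ flows $(I_1,O_1)$ are assigned to $N/2$ distinct middle switches forming a set $\mathcal{N}$, and the $N/2$ flows $(I_2,O_2)$ are assigned to distinct middle switches forming the same set $\mathcal{N}$; (P2) in every link-disjoint routing of $Y$, the $N/2$ flows $(I_1,O_1)$ are assigned to $N/2$ distinct middle switches forming a set $\mathcal{N}$, and the $N/2$ flows $(I_2,O_2)$ are assigned to distinct middle switches forming the set $\mathcal{M}\setminus\mathcal{N}$. Consequently, no routing of $X_1$ satisfies both the restriction of (P1) and of (P2) to $X_1$.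
   Context: Clos network $C_{N,R}$: a directed graph with $N$ middle switches $M_1,\dots,M_N$, $R$ input switches $I_1,\dots,I_R$, $R$ output switches $O_1,\dots,O_R$, source servers $s_i^k$ attached to $I_i$ and destination servers $t_i^k$ attached to $O_i$ ($k\in[N]$), with edges $s_i^kI_i$, $I_iM_m$, $M_mO_i$, $O_it_i^k$. A routing assigns each flow a single middle switch (i.e. a path input switch – middle switch – output switch). A routing is link-disjoint if no link $I_iM_m$ or $M_mO_j$ is used by two flows. *)

theory Defs
  imports Main
begin

text \<open>A flow (all flows have demand 1) is a quadruple (i, a, j, b): it goes from source server
s_i^a (attached to input switch I_i) to destination server t_j^b (attached to output switch O_j).\<close>

type_synonym flow = "nat \<times> nat \<times> nat \<times> nat"

definition in_sw :: "flow \<Rightarrow> nat" where "in_sw f = fst f"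
definition out_sw :: "flow \<Rightarrow> nat" where "out_sw f = fst (snd (snd f))"

definition middles :: "nat \<Rightarrow> nat set" where "middles N = {1..N}"

definition routing :: "nat \<Rightarrow> flow set \<Rightarrow> (flow \<Rightarrow> nat) \<Rightarrow> bool" where
  "routing N F r \<longleftrightarrow> (\<forall>f\<in>F. r f \<in> middles N)"

text \<open>Link-disjoint: no link I_i M_m or M_m O_j is used by two distinct flows.\<close>
definition link_disjoint :: "nat \<Rightarrow> flow set \<Rightarrow> (flow \<Rightarrow> nat) \<Rightarrow> bool" where
  "link_disjoint N F r \<longleftrightarrow> routing N F r \<and>
     (\<forall>f\<in>F. \<forall>g\<in>F. f \<noteq> g \<longrightarrow>
        \<not> (in_sw f = in_sw g \<and> r f = r g) \<and> \<not> (out_sw f = out_sw g \<and> r f = r g))"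

text \<open>The flow sets of the construction (servers indexed 1..N at every switch).\<close>
definition F11 :: "nat \<Rightarrow> flow set" where
  "F11 N = {(1, k, 1, k) | k. 1 \<le> k \<and> k \<le> N div 2}"
definition F22 :: "nat \<Rightarrow> flow set" where
  "F22 N = {(2, k, 2, k) | k. 1 \<le> k \<and> k \<le> N div 2}"
definition X1 :: "nat \<Rightarrow> flow set" where "X1 N = F11 N \<union> F22 N"
definition X2 :: "nat \<Rightarrow> flow set" where
  "X2 N = {(1, N div 2 + k, 2, N div 2 + k) | k. 1 \<le> k \<and> k \<le> N div 2}"
definition Y2 :: "nat \<Rightarrow> flow set" where
  "Y2 N = {(3, k, 1, N div 2 + k) | k. 1 \<le> k \<and> k \<le> N div 2}
        \<union> {(3, N div 2 + k, 2, N div 2 + k) | k. 1 \<le> k \<and> k \<le> N div 2}"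
definition Xset :: "nat \<Rightarrow> flow set" where "Xset N = X1 N \<union> X2 N"
definition Yset :: "nat \<Rightarrow> flow set" where "Yset N = X1 N \<union> Y2 N"

end

theory Submission
  imports Defs
begin

lemma fill:
  assumes "finite A" "finite B" "A \<inter> B = {}" "card A + card B = N"
    "inj_on r (A \<union> B)" "r ` (A \<union> B) \<subseteq> {1..N}"
  shows "r ` B = {1..N} - r ` A"
proof -
  have "card (r ` (A \<union> B)) = N"
    using assms by (simp add: card_image card_Un_disjoint)
  hence "r ` (A \<union> B) = {1..N}"
    using assms(6) by (simp add: card_subset_eq)
  moreover have "r ` A \<inter> r ` B = {}"
    using assms(3,5) by (auto simp: inj_on_def)
  ultimately show ?thesis by auto
qed

lemma inj_in:
  assumes "link_disjoint N F r" "S \<subseteq> F" "\<forall>f\<in>S. in_sw f = c"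
  shows "inj_on r S"
  using assms unfolding link_disjoint_def inj_on_def by (metis subsetD)

lemma inj_out:
  assumes "link_disjoint N F r" "S \<subseteq> F" "\<forall>f\<in>S. out_sw f = c"
  shows "inj_on r S"
  using assms unfolding link_disjoint_def inj_on_def by (metis subsetD)

lemma rng:
  assumes "link_disjoint N F r" "S \<subseteq> F"
  shows "r ` S \<subseteq> {1..N}"
  using assms unfolding link_disjoint_def routing_def middles_def by blast

lemma F11_eq: "F11 N = (\<lambda>k. (1,k,1,k)) ` {1..N div 2}"
  unfolding F11_def by auto
lemma F22_eq: "F22 N = (\<lambda>k. (2,k,2,k)) ` {1..N div 2}"
  unfolding F22_def by auto
lemma X2_eq: "X2 N = (\<lambda>k. (1,N div 2 + k,2,N div 2 + k)) ` {1..N div 2}"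
  unfolding X2_def by auto
definition Ya :: "nat \<Rightarrow> flow set" where
  "Ya N = (\<lambda>k. (3,k,1,N div 2 + k)) ` {1..N div 2}"
definition Yb :: "nat \<Rightarrow> flow set" where
  "Yb N = (\<lambda>k. (3,N div 2 + k,2,N div 2 + k)) ` {1..N div 2}"
lemma Y2_eq: "Y2 N = Ya N \<union> Yb N"
  unfolding Y2_def Ya_def Yb_def by auto

lemma cards: "card (F11 N) = N div 2" "card (F22 N) = N div 2" "card (X2 N) = N div 2"
  "card (Ya N) = N div 2" "card (Yb N) = N div 2"
  unfolding F11_eq F22_eq X2_eq Ya_def Yb_def
  by (subst card_image, auto simp: inj_on_def)+

lemma fins: "finite (F11 N)" "finite (F22 N)" "finite (X2 N)" "finite (Ya N)" "finite (Yb N)"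
  unfolding F11_eq F22_eq X2_eq Ya_def Yb_def by auto

lemma P1:
  assumes "even N" "link_disjoint N (Xset N) r"
  shows "inj_on r (F11 N) \<and> card (r ` F11 N) = N div 2 \<and>
            inj_on r (F22 N) \<and> r ` F22 N = r ` F11 N"
proof -
  have hh: "N div 2 + N div 2 = N" using assms(1) by auto
  have i1: "inj_on r (X2 N \<union> F11 N)"
    by (rule inj_in[OF assms(2), where c=1]) (auto simp: Xset_def X1_def F11_eq X2_eq in_sw_def)
  have i2: "inj_on r (X2 N \<union> F22 N)"
    by (rule inj_out[OF assms(2), where c=2]) (auto simp: Xset_def X1_def F22_eq X2_eq out_sw_def)
  have r1: "r ` (X2 N \<union> F11 N) \<subseteq> {1..N}" "r ` (X2 N \<union> F22 N) \<subseteq> {1..N}"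
    by (intro rng[OF assms(2)]; auto simp: Xset_def X1_def)+
  have d: "X2 N \<inter> F11 N = {}" "X2 N \<inter> F22 N = {}"
    unfolding F11_eq F22_eq X2_eq by auto
  have a: "r ` F11 N = {1..N} - r ` X2 N"
    by (rule fill[OF fins(3) fins(1) d(1) _ i1 r1(1)]) (simp add: cards hh)
  have b: "r ` F22 N = {1..N} - r ` X2 N"
    by (rule fill[OF fins(3) fins(2) d(2) _ i2 r1(2)]) (simp add: cards hh)
  have c1: "inj_on r (F11 N)" using i1 by (rule inj_on_subset) auto
  have c2: "inj_on r (F22 N)" using i2 by (rule inj_on_subset) auto
  have "card (r ` F11 N) = N div 2" using c1 by (simp add: card_image cards)
  thus ?thesis using a b c1 c2 by simp
qed

lemma P2:
  assumes "even N" "link_disjoint N (Yset N) r"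
  shows "inj_on r (F11 N) \<and> card (r ` F11 N) = N div 2 \<and>
            inj_on r (F22 N) \<and> r ` F22 N = middles N - r ` F11 N"
proof -
  have hh: "N div 2 + N div 2 = N" using assms(1) by auto
  have i1: "inj_on r (Ya N \<union> F11 N)"
    by (rule inj_out[OF assms(2), where c=1]) (auto simp: Yset_def X1_def Y2_eq F11_eq Ya_def out_sw_def)
  have i2: "inj_on r (Yb N \<union> F22 N)"
    by (rule inj_out[OF assms(2), where c=2]) (auto simp: Yset_def X1_def Y2_eq F22_eq Yb_def out_sw_def)
  have i3: "inj_on r (Yb N \<union> Ya N)"
    by (rule inj_in[OF assms(2), where c=3]) (auto simp: Yset_def Y2_eq Ya_def Yb_def in_sw_def)
  have r1: "r ` (Ya N \<union> F11 N) \<subseteq> {1..N}" "r ` (Yb N \<union> F22 N) \<subseteq> {1..N}"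
     "r ` (Yb N \<union> Ya N) \<subseteq> {1..N}"
    by (intro rng[OF assms(2)]; auto simp: Yset_def X1_def Y2_eq)+
  have d: "Ya N \<inter> F11 N = {}" "Yb N \<inter> F22 N = {}" "Yb N \<inter> Ya N = {}"
    unfolding F11_eq F22_eq Ya_def Yb_def by auto
  have a: "r ` F11 N = {1..N} - r ` Ya N"
    by (rule fill[OF fins(4) fins(1) d(1) _ i1 r1(1)]) (simp add: cards hh)
  have b: "r ` F22 N = {1..N} - r ` Yb N"
    by (rule fill[OF fins(5) fins(2) d(2) _ i2 r1(2)]) (simp add: cards hh)
  have c: "r ` Ya N = {1..N} - r ` Yb N"
    by (rule fill[OF fins(5) fins(4) d(3) _ i3 r1(3)]) (simp add: cards hh)
  have sub: "r ` Ya N \<subseteq> {1..N}" using r1(3) by auto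
  have e: "r ` F22 N = middles N - r ` F11 N"
    using a b c sub unfolding middles_def by auto
  have c1: "inj_on r (F11 N)" using i1 by (rule inj_on_subset) auto
  have c2: "inj_on r (F22 N)" using i2 by (rule inj_on_subset) auto
  have "card (r ` F11 N) = N div 2" using c1 by (simp add: card_image cards)
  thus ?thesis using e c1 c2 by simp
qed

lemma P3:
  assumes "N \<ge> 2"
  shows "\<not> (\<exists>r. routing N (X1 N) r \<and>
            inj_on r (F11 N) \<and> inj_on r (F22 N) \<and>
            r ` F22 N = r ` F11 N \<and> r ` F22 N = middles N - r ` F11 N)"
proof
  assume "\<exists>r. routing N (X1 N) r \<and>
            inj_on r (F11 N) \<and> inj_on r (F22 N) \<and>
            r ` F22 N = r ` F11 N \<and> r ` F22 N = middles N - r ` F11 N"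
  then obtain r where "r ` F22 N = r ` F11 N" "r ` F22 N = middles N - r ` F11 N" by blast
  hence "r ` F11 N = {}" by auto
  moreover have "(1,1,1,1) \<in> F11 N" using assms unfolding F11_def by auto
  ultimately show False by auto
qed

theorem mainTheorem11:
  fixes N :: nat
  assumes "N \<ge> 2" and "even N"
  shows "(\<forall>r. link_disjoint N (Xset N) r \<longrightarrow>
            inj_on r (F11 N) \<and> card (r ` F11 N) = N div 2 \<and>
            inj_on r (F22 N) \<and> r ` F22 N = r ` F11 N)
       \<and> (\<forall>r. link_disjoint N (Yset N) r \<longrightarrow>
            inj_on r (F11 N) \<and> card (r ` F11 N) = N div 2 \<and>
            inj_on r (F22 N) \<and> r ` F22 N = middles N - r ` F11 N)
       \<and> \<not> (\<exists>r. routing N (X1 N) r \<and>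
            inj_on r (F11 N) \<and> inj_on r (F22 N) \<and>
            r ` F22 N = r ` F11 N \<and> r ` F22 N = middles N - r ` F11 N)
       \<and> \<not> (\<exists>rX rY. link_disjoint N (Xset N) rX \<and> link_disjoint N (Yset N) rY \<and>
            (\<forall>f\<in>X1 N. rX f = rY f))"
proof -
  have 4: "\<not> (\<exists>rX rY. link_disjoint N (Xset N) rX \<and> link_disjoint N (Yset N) rY \<and>
            (\<forall>f\<in>X1 N. rX f = rY f))"
  proof
    assume "\<exists>rX rY. link_disjoint N (Xset N) rX \<and> link_disjoint N (Yset N) rY \<and>
            (\<forall>f\<in>X1 N. rX f = rY f)"
    then obtain rX rY where h: "link_disjoint N (Xset N) rX" "link_disjoint N (Yset N) rY"
      "\<forall>f\<in>X1 N. rX f = rY f" by blast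
    have q1: "rX ` F11 N = rY ` F11 N" "rX ` F22 N = rY ` F22 N"
      using h(3) unfolding X1_def by (auto intro!: image_cong)
    have "rX ` F22 N = rX ` F11 N" using P1[OF assms(2) h(1)] by blast
    moreover have "rX ` F22 N = middles N - rX ` F11 N" using P2[OF assms(2) h(2)] q1 by simp
    moreover have "routing N (X1 N) rX \<and> inj_on rX (F11 N) \<and> inj_on rX (F22 N)"
      using P1[OF assms(2) h(1)] h(1) unfolding link_disjoint_def routing_def Xset_def by blast
    ultimately show False using P3[OF assms(1)] by blast
  qed
  show ?thesis using P1[OF assms(2)] P2[OF assms(2)] P3[OF assms(1)] 4 by blast
qed

end
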